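(* Let $\mathbf{L}$ be a distributive lattice, $n\ge1$ an integer and $F$ an upset of $\mathbf{L}$. The following are equivalent: (i) $F$ is a prime $n$-filter; (ii) $F$ is a prime upset which is a union of at most $n$ filters; (iii) $F$ is a union of at most $n$ prime filters; (iv) there is a lattice homomorphism $h\colon\mathbf{L}\to\mathbf{2}^n$ with $F=h^{-1}[P_n]$, where $\mathbf{2}^n$ is the Boolean lattice with $n$ atoms (the $n$-th power of the two-element lattice $0<1$) and $P_n$ is the set of its non-zero elements.
   Context: For a set $X$, $Y\subseteq_n X$ means $Y$ is a non-empty subset of $X$ with $|Y|\le n$. An $n$-filter on a lattice is an upset $F$ such that for every non-empty finite $X\subseteq F$: if $\bigwedge Y\in F$ for every $Y\subseteq_n X$ then $\bigwedge X\in F$. A filter is a $1$-filter, i.e. an upset closed under binary meets (the empty set and the whole lattice count as filters). An upset $F$ is prime if $a\vee b\in F$ implies $a\in F$ or $b\in F$; a prime $n$-filter (prime filter) is an $n$-filter (filter) which is a prime upset. Lattice homomorphisms need not preserve bounds. *)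

theory Defs
  imports Main
begin

(* Lattices are instances of the type class distrib_lattice (bounds not required).
   Finite non-empty meets are Inf_fin. *)

definition upset :: "'a::lattice set \<Rightarrow> bool" where
  "upset F \<longleftrightarrow> (\<forall>a b. a \<in> F \<longrightarrow> a \<le> b \<longrightarrow> b \<in> F)"

definition n_filter :: "nat \<Rightarrow> 'a::lattice set \<Rightarrow> bool" where
  "n_filter n F \<longleftrightarrow> upset F \<and>
     (\<forall>X. finite X \<and> X \<noteq> {} \<and> X \<subseteq> F \<longrightarrow>
        (\<forall>Y. Y \<subseteq> X \<and> Y \<noteq> {} \<and> card Y \<le> n \<longrightarrow> Inf_fin Y \<in> F) \<longrightarrow>
        Inf_fin X \<in> F)"

(* a filter is a 1-filter (empty set and whole lattice included) *)
definition is_filter :: "'a::lattice set \<Rightarrow> bool" where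
  "is_filter F \<longleftrightarrow> n_filter 1 F"

definition prime_upset :: "'a::lattice set \<Rightarrow> bool" where
  "prime_upset F \<longleftrightarrow> upset F \<and> (\<forall>a b. sup a b \<in> F \<longrightarrow> a \<in> F \<or> b \<in> F)"

definition prime_n_filter :: "nat \<Rightarrow> 'a::lattice set \<Rightarrow> bool" where
  "prime_n_filter n F \<longleftrightarrow> n_filter n F \<and> prime_upset F"

definition prime_filter :: "'a::lattice set \<Rightarrow> bool" where
  "prime_filter F \<longleftrightarrow> is_filter F \<and> prime_upset F"

(* The Boolean lattice 2^n, realised as the sublattice of the pointwise lattice
   nat => bool consisting of functions vanishing outside {0..<n}. *)
definition two_pow :: "nat \<Rightarrow> (nat \<Rightarrow> bool) set" where
  "two_pow n = {f. \<forall>i\<ge>n. \<not> f i}"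

definition P_set :: "nat \<Rightarrow> (nat \<Rightarrow> bool) set" where
  "P_set n = two_pow n - {bot}"

(* lattice homomorphism L -> 2^n (bounds need not be preserved) *)
definition lattice_hom_to_two_pow :: "nat \<Rightarrow> ('a::lattice \<Rightarrow> nat \<Rightarrow> bool) \<Rightarrow> bool" where
  "lattice_hom_to_two_pow n h \<longleftrightarrow> (\<forall>a. h a \<in> two_pow n) \<and>
     (\<forall>a b. h (sup a b) = sup (h a) (h b)) \<and> (\<forall>a b. h (inf a b) = inf (h a) (h b))"

end

theory Submission imports Defs begin

lemma Inf_fin_mem:
  fixes F :: "'a::lattice set"
  assumes "\<forall>a\<in>F. \<forall>b\<in>F. inf a b \<in> F" "finite X" "X \<noteq> {}" "X \<subseteq> F"
  shows "Inf_fin X \<in> F"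
  using assms(2,3,4)
proof (induction X rule: finite_ne_induct)
  case (singleton x) then show ?case by simp
next
  case (insert x X) then show ?case using assms(1) by (simp add: Inf_fin.insert)
qed

lemma filter_iff:
  "is_filter (F::'a::lattice set) \<longleftrightarrow> upset F \<and> (\<forall>a\<in>F. \<forall>b\<in>F. inf a b \<in> F)"
proof
  assume f: "is_filter F"
  have u: "upset F" using f by (simp add: is_filter_def n_filter_def)
  have "inf a b \<in> F" if "a \<in> F" "b \<in> F" for a b
  proof -
    have "\<forall>Y. Y \<subseteq> {a,b} \<and> Y \<noteq> {} \<and> card Y \<le> 1 \<longrightarrow> Inf_fin Y \<in> F"
    proof (intro allI impI)
      fix Y :: "'a set" assume "Y \<subseteq> {a,b} \<and> Y \<noteq> {} \<and> card Y \<le> 1"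
      then have "finite Y" "Y \<subseteq> {a,b}" "Y \<noteq> {}" "card Y \<le> 1" using finite_subset by auto
      then obtain y where "Y = {y}" 
        by (metis One_nat_def card_0_eq card_1_singletonE le_SucE le_zero_eq)
      then show "Inf_fin Y \<in> F" using \<open>Y \<subseteq> {a,b}\<close> that by auto
    qed
    then have "Inf_fin {a,b} \<in> F" using f that unfolding is_filter_def n_filter_def
      by (metis empty_not_insert empty_subsetI finite.emptyI finite.insertI insert_subset)
    then show ?thesis by simp
  qed
  then show "upset F \<and> (\<forall>a\<in>F. \<forall>b\<in>F. inf a b \<in> F)" using u by blast
next
  assume "upset F \<and> (\<forall>a\<in>F. \<forall>b\<in>F. inf a b \<in> F)"
  then show "is_filter F" unfolding is_filter_def n_filter_def
    using Inf_fin_mem by blast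
qed

lemma upsetD: "upset F \<Longrightarrow> a \<in> F \<Longrightarrow> a \<le> b \<Longrightarrow> b \<in> F"
  by (simp add: upset_def)

lemma prime_Sup_fin:
  fixes M :: "'a::lattice set"
  assumes "prime_upset M" "finite S" "S \<noteq> {}" "Sup_fin S \<in> M"
  shows "\<exists>s\<in>S. s \<in> M"
  using assms(2,3,4)
proof (induction S rule: finite_ne_induct)
  case (singleton x) then show ?case by simp
next
  case (insert x S) then show ?case using assms(1) unfolding prime_upset_def
    by (metis Sup_fin.insert insertCI)
qed

definition maxF :: "'a::lattice set \<Rightarrow> 'a set \<Rightarrow> bool" where
  "maxF F H \<longleftrightarrow> is_filter H \<and> H \<subseteq> F \<and> (\<forall>H'. is_filter H' \<and> H \<subseteq> H' \<and> H' \<subseteq> F \<longrightarrow> H' = H)"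

lemma exists_maxF:
  fixes F G :: "'a::lattice set"
  assumes "is_filter G" "G \<subseteq> F"
  shows "\<exists>H. maxF F H \<and> G \<subseteq> H"
proof -
  let ?A = "{H. is_filter H \<and> G \<subseteq> H \<and> H \<subseteq> F}"
  have "\<exists>M\<in>?A. \<forall>X\<in>?A. M \<subseteq> X \<longrightarrow> X = M"
  proof (rule subset_Zorn_nonempty)
    show "?A \<noteq> {}" using assms by blast
  next
    fix C assume C: "C \<noteq> {}" "subset.chain ?A C"
    then have sub: "C \<subseteq> ?A" and ch: "\<forall>X\<in>C. \<forall>Y\<in>C. X \<subseteq> Y \<or> Y \<subseteq> X"
      by (auto simp: subset_chain_def)
    have "upset (\<Union>C)" unfolding upset_def
    proof (intro allI impI)
      fix a b assume "a \<in> \<Union>C" "a \<le> b"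
      then obtain X where "X \<in> C" "a \<in> X" by blast
      then have "upset X" using sub by (auto simp: filter_iff)
      then show "b \<in> \<Union>C" using \<open>X \<in> C\<close> \<open>a \<in> X\<close> \<open>a \<le> b\<close> upsetD by blast
    qed
    moreover have "\<forall>a\<in>\<Union>C. \<forall>b\<in>\<Union>C. inf a b \<in> \<Union>C"
    proof (intro ballI)
      fix a b assume "a \<in> \<Union>C" "b \<in> \<Union>C"
      then obtain X Y where XY: "X \<in> C" "Y \<in> C" "a \<in> X" "b \<in> Y" by blast
      show "inf a b \<in> \<Union>C"
      proof (cases "X \<subseteq> Y")
        case True
        have "is_filter Y" using XY sub by auto
        then have "inf a b \<in> Y" using True XY by (auto simp: filter_iff)
        then show ?thesis using XY by blast
      next
        case False
        then have "Y \<subseteq> X" using ch XY by blast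
        have "is_filter X" using XY sub by auto
        then have "inf a b \<in> X" using \<open>Y \<subseteq> X\<close> XY by (auto simp: filter_iff)
        then show ?thesis using XY by blast
      qed
    qed
    ultimately have "is_filter (\<Union>C)" by (simp add: filter_iff)
    then show "\<Union>C \<in> ?A" using sub C(1) by blast
  qed
  then obtain M where "M \<in> ?A" "\<forall>X\<in>?A. M \<subseteq> X \<longrightarrow> X = M" by blast
  then have "maxF F M \<and> G \<subseteq> M" unfolding maxF_def by blast
  then show ?thesis by blast
qed

lemma maxF_prime:
  fixes F H :: "'a::distrib_lattice set"
  assumes "maxF F H" "prime_upset F"
  shows "prime_filter H"
proof -
  have fH: "is_filter H" "H \<subseteq> F" and mx: "\<And>H'. is_filter H' \<Longrightarrow> H \<subseteq> H' \<Longrightarrow> H' \<subseteq> F \<Longrightarrow> H' = H"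
    using assms(1) unfolding maxF_def by blast+
  have uF: "upset F" and pF: "\<And>a b. sup a b \<in> F \<Longrightarrow> a \<in> F \<or> b \<in> F"
    using assms(2) unfolding prime_upset_def by blast+
  have uH: "upset H" and iH: "\<And>a b. a \<in> H \<Longrightarrow> b \<in> H \<Longrightarrow> inf a b \<in> H"
    using fH(1) by (auto simp: filter_iff)
  have "a \<in> H \<or> b \<in> H" if ab: "sup a b \<in> H" for a b
  proof (rule ccontr)
    assume na: "\<not> (a \<in> H \<or> b \<in> H)"
    have key: "\<exists>h\<in>H. inf h c \<notin> F" if "c \<notin> H" for c
    proof (rule ccontr)
      assume "\<not> (\<exists>h\<in>H. inf h c \<notin> F)"
      hence all: "\<forall>h\<in>H. inf h c \<in> F" by blast
      let ?K = "{x. \<exists>h\<in>H. inf h c \<le> x}"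
      have "upset ?K" unfolding upset_def using order_trans by blast
      moreover have "\<forall>x\<in>?K. \<forall>y\<in>?K. inf x y \<in> ?K"
      proof (intro ballI)
        fix x y assume "x \<in> ?K" "y \<in> ?K"
        then obtain h1 h2 where "h1 \<in> H" "h2 \<in> H" "inf h1 c \<le> x" "inf h2 c \<le> y" by blast
        moreover have "inf (inf h1 h2) c \<le> inf x y"
        proof -
          have "inf (inf h1 h2) c \<le> inf h1 c" "inf (inf h1 h2) c \<le> inf h2 c"
            by (rule inf_mono; simp)+
          then show ?thesis using calculation(3,4) by (meson le_inf_iff order_trans)
        qed
        ultimately show "inf x y \<in> ?K" using iH by blast
      qed
      ultimately have "is_filter ?K" by (simp add: filter_iff)
      moreover have "H \<subseteq> ?K" by (auto intro: inf.cobounded1)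
      moreover have "?K \<subseteq> F" using all uF upsetD by blast
      ultimately have "?K = H" using mx by blast
      moreover have "c \<in> ?K" using ab inf.cobounded2 by blast
      ultimately show False using that by blast
    qed
    obtain h1 where h1: "h1 \<in> H" "inf h1 a \<notin> F" using key na by blast
    obtain h2 where h2: "h2 \<in> H" "inf h2 b \<notin> F" using key na by blast
    define h where "h = inf h1 h2"
    have "h \<in> H" using h1 h2 iH h_def by blast
    hence "inf h (sup a b) \<in> F" using iH ab fH(2) by blast
    hence "sup (inf h a) (inf h b) \<in> F" by (simp add: inf_sup_distrib1)
    hence "inf h a \<in> F \<or> inf h b \<in> F" using pF by blast
    moreover have "inf h a \<le> inf h1 a" "inf h b \<le> inf h2 b" unfolding h_def
      by (auto intro: le_infI1 le_infI2 inf_mono)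
    ultimately show False using h1 h2 uF upsetD by blast
  qed
  then show ?thesis using fH(1) uH unfolding prime_filter_def prime_upset_def by blast
qed

lemma principal_filter: "is_filter {x::'a::lattice. a \<le> x}"
  by (auto simp: filter_iff upset_def)

lemma iii_i:
  fixes F :: "'a::distrib_lattice set"
  assumes "finite \<G>" "card \<G> \<le> n" "\<forall>G\<in>\<G>. prime_filter G" "F = \<Union>\<G>"
  shows "prime_n_filter n F"
proof -
  have pu: "\<And>G. G \<in> \<G> \<Longrightarrow> upset G"
    and pi: "\<And>G a b. G \<in> \<G> \<Longrightarrow> a \<in> G \<Longrightarrow> b \<in> G \<Longrightarrow> inf a b \<in> G"
    and ps: "\<And>G a b. G \<in> \<G> \<Longrightarrow> sup a b \<in> G \<Longrightarrow> a \<in> G \<or> b \<in> G"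
    using assms(3) unfolding prime_filter_def prime_upset_def filter_iff by blast+
  have uF: "upset F" unfolding upset_def
  proof (intro allI impI)
    fix a b assume "a \<in> F" "a \<le> b"
    then obtain G where "G \<in> \<G>" "a \<in> G" using assms(4) by blast
    then have "b \<in> G" using pu upsetD \<open>a \<le> b\<close> by blast
    then show "b \<in> F" using \<open>G \<in> \<G>\<close> assms(4) by blast
  qed
  have prF: "prime_upset F" unfolding prime_upset_def
  proof (intro conjI allI impI)
    fix a b assume "sup a b \<in> F"
    then obtain G where "G \<in> \<G>" "sup a b \<in> G" using assms(4) by blast
    then have "a \<in> G \<or> b \<in> G" using ps by blast
    then show "a \<in> F \<or> b \<in> F" using \<open>G \<in> \<G>\<close> assms(4) by blast
  qed (rule uF)
  have "Inf_fin X \<in> F" if X: "finite X" "X \<noteq> {}" "X \<subseteq> F"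
     and hyp: "\<forall>Y. Y \<subseteq> X \<and> Y \<noteq> {} \<and> card Y \<le> n \<longrightarrow> Inf_fin Y \<in> F" for X
  proof (rule ccontr)
    assume nX: "Inf_fin X \<notin> F"
    have "\<forall>G\<in>\<G>. \<exists>x\<in>X. x \<notin> G"
    proof
      fix G assume GG: "G \<in> \<G>"
      show "\<exists>x\<in>X. x \<notin> G"
      proof (rule ccontr)
        assume "\<not> (\<exists>x\<in>X. x \<notin> G)"
        then have "X \<subseteq> G" by blast
        moreover have "\<forall>a\<in>G. \<forall>b\<in>G. inf a b \<in> G" using pi GG by blast
        ultimately have "Inf_fin X \<in> G" using Inf_fin_mem[of G X] X(1,2) by blast
        then show False using nX assms(4) GG by blast
      qed
    qed
    then obtain f where f: "\<And>G. G\<in>\<G> \<Longrightarrow> f G \<in> X \<and> f G \<notin> G" by metis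
    have "\<G> \<noteq> {}" using X assms(4) by blast
    define Y where "Y = f ` \<G>"
    have Ys: "Y \<subseteq> X" using f unfolding Y_def by blast
    have Yne: "Y \<noteq> {}" using \<open>\<G> \<noteq> {}\<close> unfolding Y_def by blast
    have Yc: "card Y \<le> n" using assms(2) card_image_le[OF assms(1), of f] unfolding Y_def by linarith
    have Yf: "finite Y" using assms(1) unfolding Y_def by blast
    have "Inf_fin Y \<in> F" using hyp Ys Yne Yc by blast
    then obtain G where GG: "G \<in> \<G>" "Inf_fin Y \<in> G" using assms(4) by blast
    have "f G \<in> Y" using GG(1) unfolding Y_def by blast
    then have "Inf_fin Y \<le> f G" using Yf by (rule Inf_fin.coboundedI[rotated])
    then have "f G \<in> G" using pu[OF GG(1)] GG(2) upsetD by blast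
    then show False using f GG(1) by blast
  qed
  then have "n_filter n F" unfolding n_filter_def using uF by blast
  then show ?thesis unfolding prime_n_filter_def using prF by blast
qed

lemma ii_iii:
  fixes F :: "'a::distrib_lattice set"
  assumes "prime_upset F" "finite \<G>" "card \<G> \<le> n" "\<forall>G\<in>\<G>. is_filter G" "F = \<Union>\<G>"
  shows "\<exists>\<G>. finite \<G> \<and> card \<G> \<le> n \<and> (\<forall>G\<in>\<G>. prime_filter G) \<and> F = \<Union>\<G>"
proof -
  define m where "m G = (SOME H. maxF F H \<and> G \<subseteq> H)" for G
  have m: "maxF F (m G) \<and> G \<subseteq> m G" if "G \<in> \<G>" for G
    unfolding m_def using exists_maxF[of G F] assms(4,5) that by (metis (no_types, lifting) Sup_upper someI_ex)
  have "finite (m ` \<G>)" "card (m ` \<G>) \<le> n" using assms(2,3) card_image_le[OF assms(2), of m] by auto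
  moreover have "\<forall>G\<in>m ` \<G>. prime_filter G" using m maxF_prime assms(1) by blast
  moreover have "F = \<Union>(m ` \<G>)" using m assms(5) unfolding maxF_def by blast
  ultimately show ?thesis by blast
qed

lemma iii_iv:
  fixes F :: "'a::distrib_lattice set"
  assumes "finite \<G>" "card \<G> \<le> n" "\<forall>G\<in>\<G>. prime_filter G" "F = \<Union>\<G>"
  shows "\<exists>h. lattice_hom_to_two_pow n h \<and> F = h -` P_set n"
proof -
  have pf: "\<And>G. G \<in> \<G> \<Longrightarrow> upset G \<and> (\<forall>a\<in>G. \<forall>b\<in>G. inf a b \<in> G) \<and> (\<forall>a b. sup a b \<in> G \<longrightarrow> a \<in> G \<or> b \<in> G)"
    using assms(3) unfolding prime_filter_def prime_upset_def filter_iff by blast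
  obtain g where g: "bij_betw g {0..<card \<G>} \<G>" using ex_bij_betw_nat_finite[OF assms(1)] by blast
  then have gi: "\<And>i. i < card \<G> \<Longrightarrow> g i \<in> \<G>"
    unfolding bij_betw_def by auto
  have gs: "\<And>G. G \<in> \<G> \<Longrightarrow> \<exists>i<card \<G>. G = g i"
    using g unfolding bij_betw_def by (metis atLeastLessThan_iff imageE)
  define h where "h a = (\<lambda>i. i < card \<G> \<and> a \<in> g i)" for a :: 'a
  have "h a \<in> two_pow n" for a unfolding h_def two_pow_def using assms(2) by auto
  moreover have "h (sup a b) = sup (h a) (h b)" for a b
  proof -
    have "sup a b \<in> g i \<longleftrightarrow> a \<in> g i \<or> b \<in> g i" if "i < card \<G>" for i
      using pf[OF gi[OF that]] upsetD by (meson sup_ge1 sup_ge2)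
    then show ?thesis unfolding h_def by (auto simp: fun_eq_iff)
  qed
  moreover have "h (inf a b) = inf (h a) (h b)" for a b
  proof -
    have "inf a b \<in> g i \<longleftrightarrow> a \<in> g i \<and> b \<in> g i" if "i < card \<G>" for i
      using pf[OF gi[OF that]] upsetD by (meson inf_le1 inf_le2)
    then show ?thesis unfolding h_def by (auto simp: fun_eq_iff)
  qed
  moreover have "F = h -` P_set n"
  proof -
    have "a \<in> F \<longleftrightarrow> (\<exists>i. h a i)" for a
      unfolding h_def assms(4) using gi gs by blast
    moreover have "h a \<in> P_set n \<longleftrightarrow> (\<exists>i. h a i)" for a
      using \<open>\<And>a. h a \<in> two_pow n\<close> unfolding P_set_def by (auto simp: fun_eq_iff)
    ultimately show ?thesis by (simp add: set_eq_iff)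
  qed
  ultimately have "lattice_hom_to_two_pow n h" "F = h -` P_set n"
    unfolding lattice_hom_to_two_pow_def by blast+
  then show ?thesis by blast
qed

lemma iv_iii:
  fixes F :: "'a::distrib_lattice set"
  assumes "lattice_hom_to_two_pow n h" "F = h -` P_set n"
  shows "\<exists>\<G>. finite \<G> \<and> card \<G> \<le> n \<and> (\<forall>G\<in>\<G>. prime_filter G) \<and> F = \<Union>\<G>"
proof -
  have tp: "\<And>a. h a \<in> two_pow n" and hs: "\<And>a b. h (sup a b) = sup (h a) (h b)"
    and hi: "\<And>a b. h (inf a b) = inf (h a) (h b)"
    using assms(1) unfolding lattice_hom_to_two_pow_def by blast+
  define \<G> where "\<G> = (\<lambda>i. {a. h a i}) ` {..<n}"
  have "finite \<G>" "card \<G> \<le> n" unfolding \<G>_def using card_image_le[of "{..<n}"] by auto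
  moreover have "prime_filter G" if GG: "G \<in> \<G>" for G
  proof -
    obtain i where G: "G = {a. h a i}" using GG unfolding \<G>_def by blast
    have mono: "h a i \<Longrightarrow> a \<le> b \<Longrightarrow> h b i" for a b
    proof -
      assume "h a i" "a \<le> b"
      then have "h b = sup (h a) (h b)" using hs[of a b] by (simp add: sup.absorb2)
      then have "h b i = (h a i \<or> h b i)" by (metis sup_apply sup_bool_def)
      then show "h b i" using \<open>h a i\<close> by blast
    qed
    have "upset G" unfolding G upset_def using mono by blast
    moreover have "\<forall>a\<in>G. \<forall>b\<in>G. inf a b \<in> G" unfolding G using hi by simp
    moreover have "\<forall>a b. sup a b \<in> G \<longrightarrow> a \<in> G \<or> b \<in> G" unfolding G using hs by simp
    ultimately show ?thesis unfolding prime_filter_def prime_upset_def filter_iff by blast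
  qed
  moreover have "F = \<Union>\<G>"
  proof -
    have "h a \<in> P_set n \<longleftrightarrow> (\<exists>i<n. h a i)" for a
    proof -
      have "h a \<in> P_set n \<longleftrightarrow> h a \<noteq> bot" using tp[of a] unfolding P_set_def by blast
      also have "\<dots> \<longleftrightarrow> (\<exists>i. h a i)" by (auto simp: fun_eq_iff)
      also have "\<dots> \<longleftrightarrow> (\<exists>i<n. h a i)" using tp[of a] unfolding two_pow_def mem_Collect_eq by (metis not_le)
      finally show ?thesis .
    qed
    then show ?thesis unfolding assms(2) \<G>_def by auto
  qed
  ultimately show ?thesis by blast
qed

lemma distinct_maxF:
  fixes F K K' :: "'a::lattice set"
  assumes uF: "upset F" and mK: "maxF F K" and mK': "maxF F K'" and ne: "K \<noteq> K'"
  shows "\<exists>c\<in>K. \<exists>d\<in>K'. inf c d \<notin> F"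
proof -
  have fK: "is_filter K" "K \<subseteq> F" and mxK: "\<And>H'. is_filter H' \<Longrightarrow> K \<subseteq> H' \<Longrightarrow> H' \<subseteq> F \<Longrightarrow> H' = K"
    using mK unfolding maxF_def by blast+
  have fK': "is_filter K'" "K' \<subseteq> F" and mxK': "\<And>H'. is_filter H' \<Longrightarrow> K' \<subseteq> H' \<Longrightarrow> H' \<subseteq> F \<Longrightarrow> H' = K'"
    using mK' unfolding maxF_def by blast+
  have iK: "\<And>a b. a \<in> K \<Longrightarrow> b \<in> K \<Longrightarrow> inf a b \<in> K" using fK(1) by (simp add: filter_iff)
  have iK': "\<And>a b. a \<in> K' \<Longrightarrow> b \<in> K' \<Longrightarrow> inf a b \<in> K'" using fK'(1) by (simp add: filter_iff)
  have "K \<noteq> {}" using mxK[of K'] fK' ne by blast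
  then obtain c0 where c0: "c0 \<in> K" by blast
  have "K' \<noteq> {}" using mxK'[of K] fK ne by blast
  then obtain d0 where d0: "d0 \<in> K'" by blast
  let ?L = "{x. \<exists>c\<in>K. \<exists>d\<in>K'. inf c d \<le> x}"
  have "upset ?L" unfolding upset_def using order_trans by blast
  moreover have "\<forall>x\<in>?L. \<forall>y\<in>?L. inf x y \<in> ?L"
  proof (intro ballI)
    fix x y assume "x \<in> ?L" "y \<in> ?L"
    then obtain c1 d1 c2 d2 where cd: "c1 \<in> K" "d1 \<in> K'" "inf c1 d1 \<le> x" "c2 \<in> K" "d2 \<in> K'" "inf c2 d2 \<le> y"
      by blast
    have "inf (inf c1 c2) (inf d1 d2) \<le> inf c1 d1" "inf (inf c1 c2) (inf d1 d2) \<le> inf c2 d2"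
      by (rule inf_mono; simp)+
    then have "inf (inf c1 c2) (inf d1 d2) \<le> inf x y" using cd(3,6) by (meson le_inf_iff order_trans)
    then show "inf x y \<in> ?L" using iK iK' cd by blast
  qed
  ultimately have fL: "is_filter ?L" by (simp add: filter_iff)
  have KL: "K \<subseteq> ?L" using d0 by (auto intro: inf.cobounded1)
  have KL': "K' \<subseteq> ?L" using c0 by (auto intro: inf.cobounded2)
  have "\<not> ?L \<subseteq> F"
  proof
    assume LF: "?L \<subseteq> F"
    have "?L = K" by (rule mxK[OF fL KL LF])
    moreover have "?L = K'" by (rule mxK'[OF fL KL' LF])
    ultimately show False using ne by simp
  qed
  then obtain x c d where "c \<in> K" "d \<in> K'" "inf c d \<le> x" "x \<notin> F" by blast
  then show ?thesis using uF upsetD by blast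
qed

lemma no_many:
  fixes F :: "'a::distrib_lattice set"
  assumes n1: "n \<ge> 1" and pF: "prime_n_filter n F" and NM: "\<forall>K\<in>\<N>. maxF F K"
    and fin: "finite \<N>" and cN: "card \<N> = Suc n"
  shows False
proof -
  have nF: "n_filter n F" and prF: "prime_upset F" using pF unfolding prime_n_filter_def by blast+
  have uF: "upset F" using prF unfolding prime_upset_def by blast
  have Kf: "\<And>K. K\<in>\<N> \<Longrightarrow> is_filter K" and KF: "\<And>K. K\<in>\<N> \<Longrightarrow> K \<subseteq> F"
    using NM unfolding maxF_def by blast+
  have Kp: "\<And>K. K\<in>\<N> \<Longrightarrow> prime_upset K"
  proof -
    fix K assume "K \<in> \<N>"
    then have "prime_filter K" using NM maxF_prime prF by blast
    then show "prime_upset K" unfolding prime_filter_def by blast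
  qed
  have Ki: "\<And>K a b. K\<in>\<N> \<Longrightarrow> a\<in>K \<Longrightarrow> b\<in>K \<Longrightarrow> inf a b \<in> K" using Kf by (simp add: filter_iff)
  have Ku: "\<And>K. K\<in>\<N> \<Longrightarrow> upset K" using Kf by (simp add: filter_iff)
  have other: "\<And>K. K\<in>\<N> \<Longrightarrow> \<N> - {K} \<noteq> {}"
  proof -
    fix K assume "K\<in>\<N>"
    have "card (\<N> - {K}) = n" using cN fin \<open>K\<in>\<N>\<close> by simp
    then show "\<N> - {K} \<noteq> {}" using n1 by (metis card.empty not_one_le_zero)
  qed
  have "\<forall>p. \<exists>q. (fst p \<in> \<N> \<and> snd p \<in> \<N> \<and> fst p \<noteq> snd p) \<longrightarrow>
          fst q \<in> fst p \<and> snd q \<in> snd p \<and> inf (fst q) (snd q) \<notin> F"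
  proof
    fix p :: "'a set \<times> 'a set"
    show "\<exists>q. (fst p \<in> \<N> \<and> snd p \<in> \<N> \<and> fst p \<noteq> snd p) \<longrightarrow>
          fst q \<in> fst p \<and> snd q \<in> snd p \<and> inf (fst q) (snd q) \<notin> F"
    proof (cases "fst p \<in> \<N> \<and> snd p \<in> \<N> \<and> fst p \<noteq> snd p")
      case True
      then obtain a b where "a \<in> fst p" "b \<in> snd p" "inf a b \<notin> F"
        using distinct_maxF[OF uF, of "fst p" "snd p"] NM by blast
      then show ?thesis by (intro exI[of _ "(a,b)"]) simp
    next
      case False
      then show ?thesis by blast
    qed
  qed
  then obtain q where q: "\<And>p. (fst p \<in> \<N> \<and> snd p \<in> \<N> \<and> fst p \<noteq> snd p) \<longrightarrow>
          fst (q p) \<in> fst p \<and> snd (q p) \<in> snd p \<and> inf (fst (q p)) (snd (q p)) \<notin> F"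
    by metis
  define c where "c K K' = fst (q (K,K'))" for K K'
  define d where "d K K' = snd (q (K,K'))" for K K'
  have cd: "\<And>K K'. K\<in>\<N> \<Longrightarrow> K'\<in>\<N> \<Longrightarrow> K\<noteq>K' \<Longrightarrow> c K K' \<in> K \<and> d K K' \<in> K' \<and> inf (c K K') (d K K') \<notin> F"
    using q unfolding c_def d_def by (metis fst_conv snd_conv)
  define S where "S K = (\<lambda>K'. c K K') ` (\<N> - {K}) \<union> (\<lambda>K'. d K' K) ` (\<N> - {K})" for K
  define z where "z K = Inf_fin (S K)" for K
  have Sf: "\<And>K. finite (S K)" unfolding S_def using fin by blast
  have Sne: "\<And>K. K\<in>\<N> \<Longrightarrow> S K \<noteq> {}" unfolding S_def using other by blast
  have SK: "\<And>K. K\<in>\<N> \<Longrightarrow> S K \<subseteq> K" unfolding S_def using cd by blast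
  have zK: "\<And>K. K\<in>\<N> \<Longrightarrow> z K \<in> K"
  proof -
    fix K assume KN: "K\<in>\<N>"
    have "\<forall>a\<in>K. \<forall>b\<in>K. inf a b \<in> K" using Ki KN by blast
    then show "z K \<in> K" unfolding z_def using Inf_fin_mem[of K "S K"] Sf Sne SK KN by blast
  qed
  have zz: "\<And>K K'. K\<in>\<N> \<Longrightarrow> K'\<in>\<N> \<Longrightarrow> K\<noteq>K' \<Longrightarrow> inf (z K) (z K') \<notin> F"
  proof
    fix K K' assume KN: "K\<in>\<N>" "K'\<in>\<N>" "K\<noteq>K'" and inF: "inf (z K) (z K') \<in> F"
    have "c K K' \<in> S K" unfolding S_def using KN by blast
    then have 1: "z K \<le> c K K'" unfolding z_def using Sf by (rule Inf_fin.coboundedI[rotated])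
    have "d K K' \<in> S K'" unfolding S_def using KN by blast
    then have 2: "z K' \<le> d K K'" unfolding z_def using Sf by (rule Inf_fin.coboundedI[rotated])
    have "inf (z K) (z K') \<le> inf (c K K') (d K K')" using 1 2 by (rule inf_mono)
    then have "inf (c K K') (d K K') \<in> F" using inF uF upsetD by blast
    then show False using cd KN by blast
  qed
  define y where "y K = Sup_fin (z ` (\<N> - {K}))" for K
  have zyf: "\<And>K. finite (z ` (\<N> - {K}))" using fin by blast
  have zyne: "\<And>K. K\<in>\<N> \<Longrightarrow> z ` (\<N> - {K}) \<noteq> {}" using other by blast
  have yin: "\<And>K K'. K\<in>\<N> \<Longrightarrow> K'\<in>\<N> \<Longrightarrow> K\<noteq>K' \<Longrightarrow> y K' \<in> K"
  proof -
    fix K K' assume KN: "K\<in>\<N>" "K'\<in>\<N>" "K\<noteq>K'"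
    have "z K \<in> z ` (\<N> - {K'})" using KN by blast
    then have "z K \<le> y K'" unfolding y_def using zyf by (rule Sup_fin.coboundedI[rotated])
    then show "y K' \<in> K" using zK[OF KN(1)] Ku[OF KN(1)] upsetD by blast
  qed
  have ypr: "\<And>K M. K\<in>\<N> \<Longrightarrow> prime_upset M \<Longrightarrow> y K \<in> M \<Longrightarrow> \<exists>K''\<in>\<N>. K'' \<noteq> K \<and> z K'' \<in> M"
  proof -
    fix K M assume KN: "K\<in>\<N>" and pM: "prime_upset M" and yM: "y K \<in> M"
    obtain s where "s \<in> z ` (\<N> - {K})" "s \<in> M"
      using prime_Sup_fin[OF pM zyf zyne[OF KN]] yM unfolding y_def by blast
    then show "\<exists>K''\<in>\<N>. K'' \<noteq> K \<and> z K'' \<in> M" by blast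
  qed
  have yout: "\<And>K. K\<in>\<N> \<Longrightarrow> y K \<notin> K"
  proof
    fix K assume KN: "K\<in>\<N>" and yK: "y K \<in> K"
    obtain K'' where K'': "K''\<in>\<N>" "K'' \<noteq> K" "z K'' \<in> K" using ypr[OF KN Kp[OF KN] yK] by blast
    have "inf (z K) (z K'') \<in> K" using Ki[OF KN zK[OF KN] K''(3)] .
    then have "inf (z K) (z K'') \<in> F" using KF[OF KN] by blast
    then show False using zz[OF KN K''(1)] K''(2) by blast
  qed
  have inj: "inj_on y \<N>"
  proof (rule inj_onI)
    fix K K' assume KN: "K\<in>\<N>" "K'\<in>\<N>" and eq: "y K = y K'"
    show "K = K'"
    proof (rule ccontr)
      assume "K \<noteq> K'"
      then have "y K' \<in> K" using yin KN by blast
      then show False using eq yout[OF KN(1)] by simp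
    qed
  qed
  define X where "X = y ` \<N>"
  have Xf: "finite X" unfolding X_def using fin by blast
  have Xc: "card X = Suc n" unfolding X_def using card_image[OF inj] cN by simp
  have Xne: "X \<noteq> {}" using Xc by auto
  have XF: "X \<subseteq> F"
  proof
    fix x assume "x \<in> X"
    then obtain K where KN: "K\<in>\<N>" "x = y K" unfolding X_def by blast
    obtain K' where "K' \<in> \<N> - {K}" using other[OF KN(1)] by blast
    then have "x \<in> K'" using yin KN by blast
    then show "x \<in> F" using KF \<open>K' \<in> \<N> - {K}\<close> by blast
  qed
  have hyp: "\<forall>Y. Y \<subseteq> X \<and> Y \<noteq> {} \<and> card Y \<le> n \<longrightarrow> Inf_fin Y \<in> F"
  proof (intro allI impI)
    fix Y assume Y: "Y \<subseteq> X \<and> Y \<noteq> {} \<and> card Y \<le> n"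
    then have "Y \<noteq> X" using Xc by auto
    then obtain x where "x \<in> X" "x \<notin> Y" using Y by blast
    then obtain K where KN: "K\<in>\<N>" "y K \<notin> Y" unfolding X_def by blast
    have YK: "Y \<subseteq> K"
    proof
      fix w assume "w \<in> Y"
      then obtain K' where "K' \<in> \<N>" "w = y K'" using Y unfolding X_def by blast
      moreover have "K' \<noteq> K" using KN(2) \<open>w \<in> Y\<close> calculation(2) by blast
      ultimately show "w \<in> K" using yin KN(1) by blast
    qed
    have "finite Y" using Y Xf finite_subset by blast
    moreover have "\<forall>a\<in>K. \<forall>b\<in>K. inf a b \<in> K" using Ki KN by blast
    ultimately have "Inf_fin Y \<in> K" using Inf_fin_mem[of K Y] Y YK by blast
    then show "Inf_fin Y \<in> F" using KF KN by blast
  qed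
  have wF: "Inf_fin X \<in> F" using nF Xf Xne XF hyp unfolding n_filter_def by blast
  define w where "w = Inf_fin X"
  have "{x. w \<le> x} \<subseteq> F" using wF uF upsetD unfolding w_def by blast
  then obtain M where M: "maxF F M" "{x. w \<le> x} \<subseteq> M" using exists_maxF[OF principal_filter] by blast
  have pM: "prime_upset M" using maxF_prime[OF M(1) prF] unfolding prime_filter_def by blast
  have uM: "upset M" using pM unfolding prime_upset_def by blast
  have iM: "\<And>a b. a \<in> M \<Longrightarrow> b \<in> M \<Longrightarrow> inf a b \<in> M" using M(1) unfolding maxF_def by (simp add: filter_iff)
  have MF: "M \<subseteq> F" using M(1) unfolding maxF_def by blast
  have yM: "\<And>K. K\<in>\<N> \<Longrightarrow> y K \<in> M"
  proof -
    fix K assume "K \<in> \<N>"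
    then have "y K \<in> X" unfolding X_def by blast
    then have "w \<le> y K" unfolding w_def using Xf by (rule Inf_fin.coboundedI[rotated])
    then show "y K \<in> M" using M(2) by blast
  qed
  obtain K0 where K0: "K0 \<in> \<N>" using Xne unfolding X_def by blast
  obtain K1 where K1: "K1\<in>\<N>" "z K1 \<in> M" using ypr[OF K0 pM yM[OF K0]] by blast
  obtain K2 where K2: "K2\<in>\<N>" "K2 \<noteq> K1" "z K2 \<in> M" using ypr[OF K1(1) pM yM[OF K1(1)]] by blast
  have "inf (z K2) (z K1) \<in> F" using iM[OF K2(3) K1(2)] MF by blast
  then show False using zz[OF K2(1) K1(1) K2(2)] by blast
qed

lemma i_iii:
  fixes F :: "'a::distrib_lattice set"
  assumes n1: "n \<ge> 1" and pF: "prime_n_filter n F"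
  shows "\<exists>\<G>. finite \<G> \<and> card \<G> \<le> n \<and> (\<forall>G\<in>\<G>. prime_filter G) \<and> F = \<Union>\<G>"
proof -
  have prF: "prime_upset F" using pF unfolding prime_n_filter_def by blast
  have uF: "upset F" using prF unfolding prime_upset_def by blast
  define \<M> where "\<M> = {H. maxF F H}"
  have "F \<subseteq> \<Union>\<M>"
  proof
    fix a assume "a \<in> F"
    then have "{x. a \<le> x} \<subseteq> F" using uF upsetD by blast
    then obtain M where "maxF F M" "{x. a \<le> x} \<subseteq> M" using exists_maxF[OF principal_filter] by blast
    then show "a \<in> \<Union>\<M>" unfolding \<M>_def by blast
  qed
  moreover have "\<Union>\<M> \<subseteq> F" unfolding \<M>_def maxF_def by blast
  ultimately have FU: "F = \<Union>\<M>" by blast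
  have pr: "\<forall>G\<in>\<M>. prime_filter G" unfolding \<M>_def using maxF_prime prF by blast
  have fc: "finite \<M> \<and> card \<M> \<le> n"
  proof (rule ccontr)
    assume nfc: "\<not> (finite \<M> \<and> card \<M> \<le> n)"
    obtain B where B: "B \<subseteq> \<M>" "finite B" "card B = Suc n"
    proof (cases "finite \<M>")
      case True
      then have "Suc n \<le> card \<M>" using nfc by simp
      then show ?thesis using obtain_subset_with_card_n that by metis
    next
      case False
      then show ?thesis using infinite_arbitrarily_large that by metis
    qed
    have "\<forall>K\<in>B. maxF F K" using B(1) unfolding \<M>_def by blast
    then show False using no_many[OF n1 pF _ B(2,3)] by blast
  qed
  show ?thesis using fc pr FU by blast
qed

theorem mainTheorem5:
  fixes F :: "'a::distrib_lattice set" and n :: nat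
  assumes "n \<ge> 1" and "upset F"
  shows "(prime_n_filter n F \<longleftrightarrow>
            (prime_upset F \<and> (\<exists>\<G>. finite \<G> \<and> card \<G> \<le> n \<and> (\<forall>G\<in>\<G>. is_filter G) \<and> F = \<Union>\<G>)))
       \<and> ((prime_upset F \<and> (\<exists>\<G>. finite \<G> \<and> card \<G> \<le> n \<and> (\<forall>G\<in>\<G>. is_filter G) \<and> F = \<Union>\<G>)) \<longleftrightarrow>
            (\<exists>\<G>. finite \<G> \<and> card \<G> \<le> n \<and> (\<forall>G\<in>\<G>. prime_filter G) \<and> F = \<Union>\<G>))
       \<and> ((\<exists>\<G>. finite \<G> \<and> card \<G> \<le> n \<and> (\<forall>G\<in>\<G>. prime_filter G) \<and> F = \<Union>\<G>) \<longleftrightarrow>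
            (\<exists>h. lattice_hom_to_two_pow n h \<and> F = h -` P_set n))"
proof -
  let ?A = "prime_n_filter n F"
  let ?B = "prime_upset F \<and> (\<exists>\<G>. finite \<G> \<and> card \<G> \<le> n \<and> (\<forall>G\<in>\<G>. is_filter G) \<and> F = \<Union>\<G>)"
  let ?C = "\<exists>\<G>. finite \<G> \<and> card \<G> \<le> n \<and> (\<forall>G\<in>\<G>. prime_filter G) \<and> F = \<Union>\<G>"
  let ?D = "\<exists>h. lattice_hom_to_two_pow n h \<and> F = h -` P_set n"
  have CA: "?C \<Longrightarrow> ?A" using iii_i by blast
  have AC: "?A \<Longrightarrow> ?C" using i_iii[OF assms(1)] by blast
  have BC: "?B \<Longrightarrow> ?C" using ii_iii by blast
  have CB: "?C \<Longrightarrow> ?B"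
  proof -
    assume C: ?C
    then have "prime_upset F" using CA unfolding prime_n_filter_def by blast
    moreover have "\<exists>\<G>. finite \<G> \<and> card \<G> \<le> n \<and> (\<forall>G\<in>\<G>. is_filter G) \<and> F = \<Union>\<G>"
      using C unfolding prime_filter_def by blast
    ultimately show ?B by blast
  qed
  have CD: "?C \<Longrightarrow> ?D" using iii_iv by blast
  have DC: "?D \<Longrightarrow> ?C" using iv_iii by blast
  show ?thesis using CA AC BC CB CD DC by blast
qed

end
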